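(* Let $\mathbf{q}^*\in\mathbb{S}^3$ be a fixed unit quaternion (the attractor) and consider the rotational dynamical system on unit quaternions $$\boldsymbol{\omega} = \mathbf{A}_o\, k_q(\mathbf{q},\mathbf{q}^* )\, \log(\mathbf{q}\otimes\bar{\mathbf{q}}^* ),$$ where $\boldsymbol{\omega}\in\mathbb{R}^3$ is the angular velocity driving $\mathbf{q}(t)$ through the quaternion propagation equation $\dot{\mathbf{q}} = \tfrac12 \tilde{\boldsymbol{\omega}}\otimes\mathbf{q}$ with $\tilde{\boldsymbol{\omega}}=[0,\boldsymbol{\omega}^\top]^\top$, and $\mathbf{A}_o\in\mathbb{R}^{3\times3}$. If $$\mathbf{A}_o=\mathbf{A}_o^\top\prec 0 \quad\text{and}\quad k_q(\mathbf{q},\mathbf{q}^* )=\frac{\|\mathrm{vec}(\mathbf{q}\otimes\bar{\mathbf{q}}^* )\|}{\arccos(\mathrm{scalar}(\mathbf{q}\otimes\bar{\mathbf{q}}^* ))},$$ then this dynamical system is globally asymptotically stable at the attractor $\mathbf{q}^*$, i.e. $\lim_{t\to\infty}\|\log(\mathbf{q}^*\otimes\bar{\mathbf{q}}(t))\|=0$.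
   Context: A unit quaternion is $\mathbf{q}=[s,\boldsymbol{u}^\top]^\top\in\mathbb{S}^3\subset\mathbb{R}^4$ with scalar part $\mathrm{scalar}(\mathbf{q})=s\in\mathbb{R}$ and vector part $\mathrm{vec}(\mathbf{q})=\boldsymbol{u}\in\mathbb{R}^3$. The conjugate is $\bar{\mathbf{q}}=[s,-\boldsymbol{u}^\top]^\top$. The quaternion product is $\mathbf{q}_1\otimes\mathbf{q}_2=[s_1s_2-\boldsymbol{u}_1^\top\boldsymbol{u}_2,\ (s_1\boldsymbol{u}_2+s_2\boldsymbol{u}_1+\mathbf{S}(\boldsymbol{u}_1)\boldsymbol{u}_2)^\top]^\top$, where $\mathbf{S}(\cdot)$ denotes the $3\times3$ skew-symmetric (cross-product) matrix. The quaternion logarithm $\log:\mathbb{S}^3\to\mathbb{R}^3$ is $\log([s,\boldsymbol{u}^\top]^\top)=\arccos(s)\,\boldsymbol{u}/\|\boldsymbol{u}\|$ if $\|\boldsymbol{u}\|>0$ and $[0,0,0]^\top$ otherwise. The propagation equation $\dot{\mathbf{q}}=\tfrac12\tilde{\boldsymbol{\omega}}\otimes\mathbf{q}$ reads $\dot s=-\tfrac12\boldsymbol{u}^\top\boldsymbol{\omega}$, $\dot{\boldsymbol{u}}=\tfrac12(s\mathbf{I}-\mathbf{S}(\boldsymbol{u}))\boldsymbol{\omega}$. *)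

theory Defs
  imports "HOL-Analysis.Analysis" "HOL-Analysis.Cross3"
begin

type_synonym quat = "real \<times> (real^3)"

definition qscalar :: "quat \<Rightarrow> real" where "qscalar q = fst q"
definition qvec :: "quat \<Rightarrow> real^3" where "qvec q = snd q"

definition unit_quat :: "quat \<Rightarrow> bool" where
  "unit_quat q \<longleftrightarrow> (qscalar q)\<^sup>2 + (norm (qvec q))\<^sup>2 = 1"

definition qconj :: "quat \<Rightarrow> quat" where
  "qconj q = (qscalar q, - qvec q)"

text \<open>Quaternion product; the skew matrix S(u1) applied to u2 is the cross product.\<close>
definition qmult :: "quat \<Rightarrow> quat \<Rightarrow> quat" where
  "qmult q1 q2 = (qscalar q1 * qscalar q2 - qvec q1 \<bullet> qvec q2,
                  qscalar q1 *\<^sub>R qvec q2 + qscalar q2 *\<^sub>R qvec q1 + cross3 (qvec q1) (qvec q2))"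

definition qlog :: "quat \<Rightarrow> real^3" where
  "qlog q = (if norm (qvec q) > 0 then (arccos (qscalar q) / norm (qvec q)) *\<^sub>R qvec q else 0)"

definition qprop :: "real^3 \<Rightarrow> quat \<Rightarrow> quat" where
  "qprop \<omega> q = (1/2) *\<^sub>R qmult (0, \<omega>) q"

definition kq :: "quat \<Rightarrow> quat \<Rightarrow> real" where
  "kq q qs = norm (qvec (qmult q (qconj qs))) / arccos (qscalar (qmult q (qconj qs)))"

definition ds_omega :: "real^3^3 \<Rightarrow> quat \<Rightarrow> quat \<Rightarrow> real^3" where
  "ds_omega A qs q = A *v (kq q qs *\<^sub>R qlog (qmult q (qconj qs)))"

definition neg_def_sym :: "real^3^3 \<Rightarrow> bool" where
  "neg_def_sym A \<longleftrightarrow> transpose A = A \<and> (\<forall>x. x \<noteq> 0 \<longrightarrow> x \<bullet> (A *v x) < 0)"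

end

theory Submission
  imports Defs
begin
lemma deriv_split:
  assumes "(q has_vector_derivative (P1, P2)) F"
  shows "((\<lambda>t. fst (q t)) has_real_derivative P1) F"
    and "((\<lambda>t. snd (q t)) has_vector_derivative P2) F"
proof -
  have 1: "(q has_derivative (\<lambda>h. h *\<^sub>R (P1, P2))) F" using assms by (simp add: has_vector_derivative_def)
  from has_derivative_fst[OF 1] show "((\<lambda>t. fst (q t)) has_real_derivative P1) F"
    by (simp add: has_field_derivative_def mult_commute_abs)
  from has_derivative_snd[OF 1] show "((\<lambda>t. snd (q t)) has_vector_derivative P2) F"
    by (simp add: has_vector_derivative_def)
qed

lemma mvt0:
  fixes f :: "real \<Rightarrow> real"
  assumes d: "\<And>x. x \<ge> 0 \<Longrightarrow> (f has_real_derivative f' x) (at x within {0..})"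
    and "0 \<le> x" "x \<le> y"
  shows "\<exists>\<xi>. x \<le> \<xi> \<and> \<xi> \<le> y \<and> f y - f x = f' \<xi> * (y - x)"
proof -
  have "\<exists>\<xi>\<in>{x..y}. f y - f x = (\<lambda>h. f' \<xi> * h) (y - x)"
  proof (rule mvt_very_simple[OF \<open>x \<le> y\<close>])
    fix z assume "x \<le> z" "z \<le> y"
    then have "(f has_real_derivative f' z) (at z within {x..y})"
      using d[of z] assms(2) by (auto intro: DERIV_subset)
    then show "(f has_derivative (\<lambda>h. f' z * h)) (at z within {x..y})"
      by (simp add: has_field_derivative_def)
  qed
  then show ?thesis by auto
qed

lemma nd2: "(norm (X - c))\<^sup>2 = (norm X)\<^sup>2 - 2*(X \<bullet> c) + (norm c)\<^sup>2" for X c :: "'a::real_inner"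
  unfolding power2_norm_eq_inner by (simp add: inner_diff_left inner_diff_right inner_commute[of c X])

lemma lagr:
  fixes v u :: "real^3" and a b :: real
  shows "(a*b + v \<bullet> u)\<^sup>2 + (norm (b *\<^sub>R v - a *\<^sub>R u - cross3 v u))\<^sup>2
        = (a\<^sup>2 + (norm v)\<^sup>2) * (b\<^sup>2 + (norm u)\<^sup>2)"
proof -
  have c: "(norm (cross3 v u))\<^sup>2 = (norm v)\<^sup>2 * (norm u)\<^sup>2 - (v \<bullet> u)\<^sup>2"
    using norm_cross_dot[of v u] unfolding power_mult_distrib by linarith
  have o1: "(b *\<^sub>R v - a *\<^sub>R u) \<bullet> cross3 v u = 0"
    by (simp add: dot_cross_self inner_diff_left)
  have o2: "(norm (b *\<^sub>R v - a *\<^sub>R u))\<^sup>2 = b\<^sup>2 * (norm v)\<^sup>2 - 2*a*b*(v \<bullet> u) + a\<^sup>2 * (norm u)\<^sup>2"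
    unfolding nd2 by (simp add: power_mult_distrib inner_commute[of u v])
  have "(norm (b *\<^sub>R v - a *\<^sub>R u - cross3 v u))\<^sup>2
     = b\<^sup>2 * (norm v)\<^sup>2 - 2*a*b*(v \<bullet> u) + a\<^sup>2 * (norm u)\<^sup>2 + (norm v)\<^sup>2 * (norm u)\<^sup>2 - (v \<bullet> u)\<^sup>2"
    unfolding nd2[of "b *\<^sub>R v - a *\<^sub>R u"] o1 o2 c by simp
  then show ?thesis 
    by (simp add: power2_eq_square algebra_simps)
qed

lemma negdef_bound:
  assumes "neg_def_sym A"
  shows "\<exists>lam>0. \<forall>x. lam * (norm x)\<^sup>2 \<le> - (x \<bullet> (A *v x))"
proof -
  have nd: "\<And>x. x \<noteq> 0 \<Longrightarrow> x \<bullet> (A *v x) < 0" using assms by (simp add: neg_def_sym_def)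
  have cont: "continuous_on (sphere (0::real^3) 1) (\<lambda>x. - (x \<bullet> (A *v x)))"
    by (intro continuous_intros linear_continuous_on) simp
  obtain x0 where x0: "x0 \<in> sphere (0::real^3) 1" and m: "\<And>y. y \<in> sphere 0 1 \<Longrightarrow> - (x0 \<bullet> (A *v x0)) \<le> - (y \<bullet> (A *v y))"
    using continuous_attains_inf[OF compact_sphere _ cont] by fastforce
  define lam where "lam = - (x0 \<bullet> (A *v x0))"
  have "x0 \<noteq> 0" using x0 by auto
  then have lp: "lam > 0" using nd[of x0] by (simp add: lam_def)
  have "lam * (norm x)\<^sup>2 \<le> - (x \<bullet> (A *v x))" for x
  proof (cases "x = 0")
    case True then show ?thesis by simp
  next
    case False
    define z where "z = (1 / norm x) *\<^sub>R x"
    have "z \<in> sphere 0 1" using False by (simp add: z_def)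
    then have "lam \<le> - (z \<bullet> (A *v z))" using m by (simp add: lam_def)
    also have "- (z \<bullet> (A *v z)) = - (x \<bullet> (A *v x)) / (norm x)\<^sup>2"
      by (simp add: z_def matrix_vector_mult_scaleR power2_eq_square)
    finally show ?thesis using False by (simp add: field_simps)
  qed
  then show ?thesis using lp by blast
qed

lemma triple: "(cross3 w v) \<bullet> u = w \<bullet> (cross3 v u)"
  by (simp add: cross3_simps)

theorem theorem5:
  fixes A :: "real^3^3" and qs :: quat and q :: "real \<Rightarrow> quat"
  assumes "unit_quat qs"
    and "neg_def_sym A"
    and "unit_quat (q 0)"
    and "\<And>t. t \<ge> 0 \<Longrightarrow>
           (q has_vector_derivative qprop (ds_omega A qs (q t)) (q t)) (at t within {0..})"
  shows "((\<lambda>t. norm (qlog (qmult qs (qconj (q t))))) \<longlongrightarrow> 0) at_top"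
proof -
  obtain sq uq where qs: "qs = (sq, uq)" by (cases qs)
  define a where "a t = fst (q t)" for t
  define v where "v t = snd (q t)" for t
  have qt: "q t = (a t, v t)" for t by (simp add: a_def v_def)
  define w where "w t = ds_omega A qs (q t)" for t
  define s where "s t = a t * sq + v t \<bullet> uq" for t
  define ue where "ue t = sq *\<^sub>R v t - a t *\<^sub>R uq - cross3 (v t) uq" for t
  have e1: "qmult (q t) (qconj qs) = (s t, ue t)" for t
    by (simp add: qt qs qmult_def qconj_def qscalar_def qvec_def s_def ue_def algebra_simps)
  have e2: "qmult qs (qconj (q t)) = (s t, - ue t)" for t
    using cross_skew[of uq "v t"]
    by (simp add: qt qs qmult_def qconj_def qscalar_def qvec_def s_def ue_def algebra_simps inner_commute)
  have D: "(q has_vector_derivative (- (w t \<bullet> v t) / 2, (1/2) *\<^sub>R (a t *\<^sub>R w t + cross3 (w t) (v t))))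
      (at t within {0..})" if "t \<ge> 0" for t
    using assms(4)[OF that]
    by (simp add: w_def qprop_def qmult_def qscalar_def qvec_def qt)
  have Da: "(a has_real_derivative - (w t \<bullet> v t) / 2) (at t within {0..})" if "t \<ge> 0" for t
    using deriv_split(1)[OF D[OF that]] by (simp add: a_def[abs_def])
  have Dv: "(v has_derivative (\<lambda>h. h *\<^sub>R ((1/2) *\<^sub>R (a t *\<^sub>R w t + cross3 (w t) (v t))))) (at t within {0..})"
    if "t \<ge> 0" for t
    using deriv_split(2)[OF D[OF that]] by (simp add: v_def[abs_def] has_vector_derivative_def)
  have DN: "((\<lambda>t. (a t)\<^sup>2 + v t \<bullet> v t) has_real_derivative 0) (at t within {0..})" if "t \<ge> 0" for t
  proof -
    have h1: "((\<lambda>t. (a t)\<^sup>2) has_real_derivative (- (w t \<bullet> v t * a t))) (at t within {0..})"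
      using DERIV_power[OF Da[OF that], of 2] by simp
    note h1' = h1[unfolded has_field_derivative_def]
    note h2 = has_derivative_inner[OF Dv[OF that] Dv[OF that]]
    have "((\<lambda>t. (a t)\<^sup>2 + v t \<bullet> v t) has_derivative (\<lambda>h. h * 0)) (at t within {0..})"
      using has_derivative_add[OF h1' h2] 
      by (simp add: inner_add_right inner_add_left dot_cross_self inner_commute[of "w t" "v t"] algebra_simps)
    then show ?thesis unfolding has_field_derivative_def by (rule has_derivative_eq_rhs) auto
  qed
  have N1: "(a t)\<^sup>2 + (norm (v t))\<^sup>2 = 1" if "t \<ge> 0" for t
  proof -
    have "(a t)\<^sup>2 + v t \<bullet> v t - ((a 0)\<^sup>2 + v 0 \<bullet> v 0) = 0"
      using mvt0[of "\<lambda>t. (a t)\<^sup>2 + v t \<bullet> v t" "\<lambda>_. 0" 0 t] DN that by auto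
    moreover have "(a 0)\<^sup>2 + (norm (v 0))\<^sup>2 = 1" using assms(3) by (simp add: unit_quat_def qt qscalar_def qvec_def)
    ultimately show ?thesis by (simp add: power2_norm_eq_inner)
  qed
  have Q1: "sq\<^sup>2 + (norm uq)\<^sup>2 = 1" using assms(1) by (simp add: unit_quat_def qs qscalar_def qvec_def)
  have S1: "(s t)\<^sup>2 + (norm (ue t))\<^sup>2 = 1" if "t \<ge> 0" for t
    using lagr[of "a t" sq "v t" uq] N1[OF that] Q1 by (simp add: s_def ue_def)
  have sb: "-1 \<le> s t \<and> s t \<le> 1" if "t \<ge> 0" for t
  proof -
    have "(s t)\<^sup>2 \<le> 1" using S1[OF that] zero_le_power2[of "norm (ue t)"] by linarith
    then have "(s t)\<^sup>2 \<le> 1\<^sup>2" by simp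
    then show ?thesis using abs_le_square_iff[of "s t" 1] by (simp add: abs_le_iff)
  qed
  have W: "w t = A *v ue t" if "t \<ge> 0" for t
  proof (cases "ue t = 0")
    case True then show ?thesis by (simp add: w_def ds_omega_def kq_def qlog_def e1 qscalar_def qvec_def)
  next
    case False
    have "arccos (s t) \<noteq> 0"
    proof
      assume "arccos (s t) = 0"
      then have "s t = 1" using cos_arccos[of "s t"] sb[OF that] by simp
      then show False using S1[OF that] False by simp
    qed
    then show ?thesis using False by (simp add: w_def ds_omega_def kq_def qlog_def e1 qscalar_def qvec_def)
  qed
  have Ds: "(s has_real_derivative - (ue t \<bullet> (A *v ue t)) / 2) (at t within {0..})" if "t \<ge> 0" for t
  proof -
    note h1 = Da[OF that, unfolded has_field_derivative_def]
    note h2 = bounded_linear.has_derivative[OF bounded_linear_inner_left[of uq] Dv[OF that]]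
    have key: "sq * (- (w t \<bullet> v t) / 2) + ((1/2) *\<^sub>R (a t *\<^sub>R w t + cross3 (w t) (v t))) \<bullet> uq
        = - (w t \<bullet> ue t) / 2"
      by (simp add: ue_def triple inner_diff_right inner_add_left algebra_simps)
    have "(s has_derivative (\<lambda>h. h * (- (w t \<bullet> ue t) / 2))) (at t within {0..})"
      unfolding s_def[abs_def]
      apply (rule has_derivative_eq_rhs[OF has_derivative_add[OF has_derivative_mult_left[OF h1, of sq] h2]])
      apply (rule ext)
      apply (simp only: inner_scaleR_left key[symmetric])
      apply (simp add: algebra_simps)
      done
    then have "(s has_derivative (\<lambda>h. (- (ue t \<bullet> (A *v ue t)) / 2) * h)) (at t within {0..})"
      using W[OF that] by (simp add: inner_commute mult.commute)
    then show ?thesis unfolding has_field_derivative_def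
      by (rule has_derivative_eq_rhs) auto
  qed
  obtain lam where lam: "lam > 0" "\<And>x. lam * (norm x)\<^sup>2 \<le> - (x \<bullet> (A *v x))"
    using negdef_bound[OF assms(2)] by blast
  have Dsb: "lam / 2 * (1 - (s t)\<^sup>2) \<le> - (ue t \<bullet> (A *v ue t)) / 2" if "t \<ge> 0" for t
  proof -
    have "1 - (s t)\<^sup>2 = (norm (ue t))\<^sup>2" using S1[OF that] by linarith
    then show ?thesis using lam(2)[of "ue t"] by simp
  qed
  have Dsnn: "0 \<le> - (ue t \<bullet> (A *v ue t)) / 2" if "t \<ge> 0" for t
  proof -
    have "0 \<le> lam * (norm (ue t))\<^sup>2" using lam(1) by simp
    then show ?thesis using lam(2)[of "ue t"] by linarith
  qed
  have mono: "s x \<le> s y" if "0 \<le> x" "x \<le> y" for x y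
  proof -
    have "\<exists>\<xi>\<ge>x. \<xi> \<le> y \<and> s y - s x = - (ue \<xi> \<bullet> (A *v ue \<xi>)) / 2 * (y - x)"
      by (rule mvt0[where f'="\<lambda>t. - (ue t \<bullet> (A *v ue t)) / 2"]) (fact Ds, use that in auto)
    then obtain \<xi> where "x \<le> \<xi>" "s y - s x = - (ue \<xi> \<bullet> (A *v ue \<xi>)) / 2 * (y - x)"
      by blast
    moreover have "0 \<le> - (ue \<xi> \<bullet> (A *v ue \<xi>)) / 2 * (y - x)"
      using Dsnn[of \<xi>] that \<open>x \<le> \<xi>\<close> by (intro mult_nonneg_nonneg) auto
    ultimately show ?thesis by linarith
  qed
  have bnd: "norm (qlog (qmult qs (qconj (q t)))) \<le> arccos (s t)" if "t \<ge> 0" for t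
    using sb[OF that] arccos_lbound[of "s t"]
    by (simp add: e2 qlog_def qscalar_def qvec_def)
  have bnd0: "norm (qlog (qmult qs (qconj (q t)))) = 0" if "t \<ge> 0" "s t = -1" for t
  proof -
    have "ue t = 0" using S1[OF that(1)] that(2) by simp
    then show ?thesis by (simp add: e2 qlog_def qscalar_def qvec_def)
  qed
  show ?thesis unfolding tendsto_iff eventually_at_top_linorder
  proof (intro allI impI)
    fix \<epsilon> :: real assume ep: "\<epsilon> > 0"
    show "\<exists>N. \<forall>t\<ge>N. dist (norm (qlog (qmult qs (qconj (q t))))) 0 < \<epsilon>"
    proof (cases "\<forall>t\<ge>0. s t = -1")
      case True
      show ?thesis
      proof (intro exI[of _ 0] allI impI)
        fix t :: real assume "t \<ge> 0"
        then show "dist (norm (qlog (qmult qs (qconj (q t))))) 0 < \<epsilon>"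
          using bnd0[of t] True ep by simp
      qed
    next
      case False
      then obtain T where T: "T \<ge> 0" "s T \<noteq> -1" by auto
      then have sT: "s T > -1" using sb[OF T(1)] by linarith
      define e' where "e' = min \<epsilon> 1"
      have e': "0 < e'" "e' \<le> \<epsilon>" "e' \<le> pi" using ep pi_gt3 by (auto simp: e'_def)
      define c0 where "c0 = cos e'"
      have c0: "c0 < 1" using cos_monotone_0_pi[of 0 e'] e' by (simp add: c0_def)
      have "\<exists>t1\<ge>T. s t1 > c0"
      proof (rule ccontr)
        assume "\<not> ?thesis"
        then have le: "\<And>t. t \<ge> T \<Longrightarrow> s t \<le> c0" by force
        define r where "r = lam / 2 * ((1 - c0) * (1 + s T))"
        have r: "r > 0" using lam(1) c0 sT by (simp add: r_def)
        have dr: "r \<le> - (ue t \<bullet> (A *v ue t)) / 2" if "t \<ge> T" for t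
        proof -
          have "(1 - c0) * (1 + s T) \<le> (1 - s t) * (1 + s t)"
            using le[OF that] mono[OF T(1) that] sT c0 by (intro mult_mono) auto
          then have "r \<le> lam / 2 * ((1 - s t) * (1 + s t))"
            unfolding r_def using lam(1) by (intro mult_left_mono) auto
          also have "(1 - s t) * (1 + s t) = 1 - (s t)\<^sup>2" by (simp add: power2_eq_square algebra_simps)
          finally have "r \<le> lam / 2 * (1 - (s t)\<^sup>2)" .
          then show ?thesis using Dsb[of t] that T(1) by linarith
        qed
        define t2 where "t2 = T + 3 / r"
        have "T \<le> t2" using r by (simp add: t2_def)
        have "\<exists>\<xi>\<ge>T. \<xi> \<le> t2 \<and> s t2 - s T = - (ue \<xi> \<bullet> (A *v ue \<xi>)) / 2 * (t2 - T)"
          by (rule mvt0[where f'="\<lambda>t. - (ue t \<bullet> (A *v ue t)) / 2"]) (fact Ds, use T(1) \<open>T \<le> t2\<close> in auto)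
        then obtain \<xi> where xi: "T \<le> \<xi>" "s t2 - s T = - (ue \<xi> \<bullet> (A *v ue \<xi>)) / 2 * (t2 - T)"
          by blast
        have "r * (t2 - T) \<le> - (ue \<xi> \<bullet> (A *v ue \<xi>)) / 2 * (t2 - T)"
          using dr[OF xi(1)] \<open>T \<le> t2\<close> by (intro mult_right_mono) auto
        moreover have "r * (t2 - T) = 3" using r by (simp add: t2_def)
        moreover have "s t2 \<le> 1" using sb[of t2] \<open>T \<le> t2\<close> T(1) by simp
        ultimately show False using xi(2) sT by linarith
      qed
      then obtain t1 where t1: "t1 \<ge> T" "s t1 > c0" by blast
      have "norm (qlog (qmult qs (qconj (q t)))) < \<epsilon>" if "t \<ge> t1" for t
      proof -
        have t0: "t \<ge> 0" using that t1 T by linarith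
        have "s t > c0" using mono[of t1 t] t1 T that by force
        then have "arccos (s t) < arccos c0"
          using sb[OF t0] c0 by (intro arccos_less_arccos) (auto simp: c0_def)
        also have "arccos c0 = e'" using arccos_cos[of e'] e' by (simp add: c0_def)
        finally show ?thesis using bnd[OF t0] e' by linarith
      qed
      then show ?thesis by auto
    qed
  qed
qed
end
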